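(* Let $\mu$ be a probability measure on $[0,1]$ that is absolutely continuous with continuous density, let $q\in(0,1)$ and $y\in\mathbb{R}$. For each $n$, let $X_1,\dots,X_n$ be i.i.d. with law $\mu$ and $\vec X=(X_1,\dots,X_n)$. Then \[ \lim_{n\to\infty}\mathbb{E}[SW(\vec X,y)]=q-W_1(\mu,q\delta_y), \] where $\delta_y$ is the Dirac measure at $y$.
   Context: For $n$ agents at positions $\vec x=(x_1,\dots,x_n)$ and a facility at $y$ with capacity $q$, the facility accommodates the $\lfloor qn\rfloor$ agents closest to $y$ (ties broken arbitrarily); an accommodated agent $i$ receives utility $1-|x_i-y|$ and every other agent receives $0$. The social welfare is normalized: $SW(\vec x,y)=\frac1n\sum_{i=1}^n u_i$. For a probability measure $\alpha$ and a positive measure $\beta$ on $\mathbb{R}$ with $\beta(\mathbb{R})\le 1$, $W_1(\alpha,\beta)=\min\int|x-z|\,d\pi(x,z)$ over positive measures $\pi$ on $\mathbb{R}\times\mathbb{R}$ with second marginal equal to $\beta$ and first marginal dominated by $\alpha$. *)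

theory Defs
  imports "HOL-Probability.Probability"
begin

text \<open>Social welfare: n agents at positions x 0, ..., x (n-1), facility at y with capacity q.
  The floor(q n) agents closest to y are accommodated; the utilities of the accommodated
  agents are determined by the floor(q n) smallest distances (ties do not matter), so we
  sum 1 - d over the floor(q n) smallest distances d, normalised by 1/n.\<close>
definition SW :: "real \<Rightarrow> nat \<Rightarrow> (nat \<Rightarrow> real) \<Rightarrow> real \<Rightarrow> real" where
  "SW q n x y =
     (let ds = sort (map (\<lambda>i. \<bar>x i - y\<bar>) [0..<n]);
          k = nat \<lfloor>q * real n\<rfloor>
      in (1 / real n) * sum_list (map (\<lambda>d. 1 - d) (take k ds)))"

definition W1 :: "real measure \<Rightarrow> real measure \<Rightarrow> ennreal" where
  "W1 \<alpha> \<beta> =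
     (INF \<pi> \<in> {\<pi> :: (real \<times> real) measure.
              sets \<pi> = sets (borel \<Otimes>\<^sub>M borel) \<and>
              (\<forall>A \<in> sets borel. emeasure (distr \<pi> borel fst) A \<le> emeasure \<alpha> A) \<and>
              distr \<pi> borel snd = \<beta>}.
        \<integral>\<^sup>+ p. ennreal \<bar>fst p - snd p\<bar> \<partial>\<pi>)"

end

theory Submission
  imports Defs "HOL-Real_Asymp.Real_Asymp"
begin


definition Gl :: "nat \<Rightarrow> real list \<Rightarrow> real \<Rightarrow> real" where
  "Gl k ds t = real k * t - sum_list (map (\<lambda>d. max (t - d) 0) ds)"

definition Gs :: "nat \<Rightarrow> nat \<Rightarrow> (nat \<Rightarrow> real) \<Rightarrow> real \<Rightarrow> real" where
  "Gs k n d t = real k * t - (\<Sum>i<n. max (t - d i) 0)"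

lemma sum_list_sort_map: "sum_list (map g (sort xs)) = sum_list (map (g::real\<Rightarrow>real) xs)"
  by (metis mset_map mset_sort sum_mset_sum_list)

lemma sum_list_map_upt: "sum_list (map g (map d [0..<n])) = (\<Sum>i<n. (g (d i)::real))"
  by (induct n) auto

lemma sum_list_lin: "real (length xs) * t - sum_list (map (\<lambda>d. max (t - d) 0) xs) \<le> sum_list (xs::real list)"
  by (induct xs) (auto simp: algebra_simps)

lemma sum_list_cminus: "sum_list (map (\<lambda>x. c - x) xs) = real (length xs) * c - sum_list (xs::real list)"
  by (induct xs) (auto simp: algebra_simps)

lemma sum_list_oneminus: "sum_list (map (\<lambda>x. 1 - x) xs) = real (length xs) - sum_list (xs::real list)"
  by (induct xs) (auto simp: algebra_simps)

lemma L1: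
  assumes "k \<le> length ds"
  shows "Gl k ds t \<le> sum_list (take k (sort ds))"
proof -
  define s where "s = sort ds"
  define g where "g = (\<lambda>d::real. max (t - d) 0)"
  have "sum_list (map g ds) = sum_list (map g s)" unfolding s_def by (simp add: sum_list_sort_map)
  also have "\<dots> = sum_list (map g (take k s)) + sum_list (map g (drop k s))"
    by (metis append_take_drop_id map_append sum_list_append)
  moreover have "0 \<le> sum_list (map g (drop k s))" by (rule sum_list_nonneg) (auto simp: g_def)
  ultimately have 1: "sum_list (map g (take k s)) \<le> sum_list (map g ds)" by linarith
  have "length (take k s) = k" using assms by (simp add: s_def)
  then have "real k * t - sum_list (map g (take k s)) \<le> sum_list (take k s)"
    using sum_list_lin[of "take k s" t] by (simp add: g_def)
  then show ?thesis using 1 unfolding Gl_def s_def g_def by linarith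
qed

lemma L2:
  assumes "1 \<le> k" "k \<le> length ds"
  shows "Gl k ds (sort ds ! (k - 1)) = sum_list (take k (sort ds))"
proof -
  define s where "s = sort ds"
  define t0 where "t0 = s ! (k - 1)"
  define g where "g = (\<lambda>d::real. max (t0 - d) 0)"
  have srt: "sorted s" by (simp add: s_def)
  have len: "length s = length ds" by (simp add: s_def)
  have t0in: "t0 \<in> set (take k s)"
  proof -
    have "take k s ! (k-1) = t0" using assms len by (simp add: t0_def)
    moreover have "k - 1 < length (take k s)" using assms len by simp
    ultimately show ?thesis by (metis nth_mem)
  qed
  have a: "x \<le> t0" if "x \<in> set (take k s)" for x
  proof -
    from that obtain j where j: "j < length (take k s)" "x = take k s ! j" by (auto simp: in_set_conv_nth)
    have "j \<le> k - 1" "k - 1 < length s" using j assms len by auto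
    then show ?thesis using j srt unfolding t0_def by (simp add: sorted_nth_mono)
  qed
  have b: "t0 \<le> x" if "x \<in> set (drop k s)" for x
    using srt t0in that by (metis append_take_drop_id sorted_append)
  have "sum_list (map g ds) = sum_list (map g s)" unfolding s_def by (simp add: sum_list_sort_map)
  also have "\<dots> = sum_list (map g (take k s)) + sum_list (map g (drop k s))"
    by (metis append_take_drop_id map_append sum_list_append)
  also have "map g (drop k s) = map (\<lambda>_. 0) (drop k s)" using b by (auto simp: g_def)
  also have "map g (take k s) = map (\<lambda>x. t0 - x) (take k s)" using a by (auto simp: g_def)
  finally have "sum_list (map g ds) = real k * t0 - sum_list (take k s)"
    using assms len by (simp add: sum_list_cminus)
  then show ?thesis unfolding Gl_def g_def t0_def s_def by simp
qed

lemma L3: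
  assumes "1 \<le> k" "k \<le> length ds"
  shows "sum_list (take k (sort ds)) = Max (Gl k ds ` set ds)"
proof (rule Max_eqI[symmetric])
  show "finite (Gl k ds ` set ds)" by simp
  show "y \<le> sum_list (take k (sort ds))" if "y \<in> Gl k ds ` set ds" for y
    using that L1 assms by auto
  have "k - 1 < length (sort ds)" using assms by simp
  then have "sort ds ! (k - 1) \<in> set ds" by (metis nth_mem set_sort)
  then show "sum_list (take k (sort ds)) \<in> Gl k ds ` set ds" using L2[OF assms] by force
qed

lemma L4:
  fixes d :: "nat \<Rightarrow> real"
  shows "Gs k n d t - Gs k n d t0 \<le> (real k - (\<Sum>i<n. if d i \<le> t0 then 1 else 0)) * (t - t0)"
proof -
  define N where "N = (\<Sum>i<n. if d i \<le> t0 then 1 else (0::real))"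
  have "(\<Sum>i<n. max (t0 - d i) 0) - (\<Sum>i<n. max (t - d i) 0) \<le> (\<Sum>i<n. (if d i \<le> t0 then 1 else 0) * (t0 - t))"
    unfolding sum_subtractf[symmetric] by (rule sum_mono) auto
  also have "\<dots> = N * (t0 - t)" unfolding N_def by (simp add: sum_distrib_right)
  finally have 1: "(\<Sum>i<n. max (t0 - d i) 0) - (\<Sum>i<n. max (t - d i) 0) \<le> N * (t0 - t)" .
  have "(real k - N) * (t - t0) = real k * t - real k * t0 + N * (t0 - t)" by (simp add: algebra_simps)
  then show ?thesis using 1 unfolding Gs_def N_def[symmetric] by linarith
qed

lemma Gl_Gs: "Gl k (map d [0..<n]) t = Gs k n d t"
  unfolding Gl_def Gs_def by (simp add: sum_list_map_upt[of "\<lambda>x. max (t - x) 0", simplified])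

lemma Max_rep:
  assumes "1 \<le> k" "k \<le> n"
  shows "sum_list (take k (sort (map d [0..<n]))) = Max ((\<lambda>i. Gs k n d (d i)) ` {..<n})"
proof -
  have "sum_list (take k (sort (map d [0..<n]))) = Max (Gl k (map d [0..<n]) ` set (map d [0..<n]))"
    using assms by (intro L3) auto
  also have "Gl k (map d [0..<n]) ` set (map d [0..<n]) = (\<lambda>i. Gs k n d (d i)) ` {..<n}"
    by (auto simp: Gl_Gs image_image lessThan_atLeast0)
  finally show ?thesis .
qed

lemma P_bound:
  fixes d :: "nat \<Rightarrow> real"
  assumes "1 \<le> k" "k \<le> n" "\<And>i. i < n \<Longrightarrow> 0 \<le> d i \<and> d i \<le> C" "0 \<le> t0" "t0 \<le> C"
  shows "\<bar>Max ((\<lambda>i. Gs k n d (d i)) ` {..<n}) - Gs k n d t0\<bar>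
           \<le> C * \<bar>real k - (\<Sum>i<n. if d i \<le> t0 then 1 else 0)\<bar>"
proof -
  define N where "N = (\<Sum>i<n. if d i \<le> t0 then 1 else (0::real))"
  define M where "M = Max ((\<lambda>i. Gs k n d (d i)) ` {..<n})"
  have "Gs k n d t0 = Gl k (map d [0..<n]) t0" by (simp add: Gl_Gs)
  also have "\<dots> \<le> sum_list (take k (sort (map d [0..<n])))" using assms by (intro L1) auto
  also have "\<dots> = M" unfolding M_def using assms(1,2) by (rule Max_rep)
  finally have lo: "Gs k n d t0 \<le> M" .
  have "{..<n} \<noteq> {}" using assms(1,2) by (simp add: lessThan_empty_iff)
  then have "M \<in> (\<lambda>i. Gs k n d (d i)) ` {..<n}" unfolding M_def
    by (intro Max_in) auto
  then obtain i where i: "i < n" "M = Gs k n d (d i)" by auto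
  have "M - Gs k n d t0 \<le> (real k - N) * (d i - t0)" unfolding i N_def by (rule L4)
  also have "\<dots> \<le> \<bar>real k - N\<bar> * \<bar>d i - t0\<bar>" by (metis abs_ge_self abs_mult)
  also have "\<dots> \<le> \<bar>real k - N\<bar> * C"
    using assms(3)[OF i(1)] assms(4,5) by (intro mult_left_mono) auto
  finally show ?thesis using lo unfolding M_def[symmetric] N_def[symmetric] by (simp add: mult.commute)
qed

lemma SW_eq:
  assumes "1 \<le> nat \<lfloor>q * real n\<rfloor>" "nat \<lfloor>q * real n\<rfloor> \<le> n"
  shows "SW q n x y = (real (nat \<lfloor>q * real n\<rfloor>)
     - Max ((\<lambda>i. Gs (nat \<lfloor>q * real n\<rfloor>) n (\<lambda>i. \<bar>x i - y\<bar>) \<bar>x i - y\<bar>) ` {..<n})) / real n"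
proof -
  define k where "k = nat \<lfloor>q * real n\<rfloor>"
  have "map (\<lambda>i. \<bar>x i - y\<bar>) [0..<n] = map (\<lambda>i. \<bar>x i - y\<bar>) [0..<n]" ..
  have "SW q n x y = (1 / real n) * (real k - sum_list (take k (sort (map (\<lambda>i. \<bar>x i - y\<bar>) [0..<n]))))"
    unfolding SW_def Let_def k_def[symmetric] using assms unfolding k_def[symmetric]
    by (simp add: sum_list_oneminus min_def)
  also have "sum_list (take k (sort (map (\<lambda>i. \<bar>x i - y\<bar>) [0..<n])))
     = Max ((\<lambda>i. Gs k n (\<lambda>i. \<bar>x i - y\<bar>) \<bar>x i - y\<bar>) ` {..<n})"
    using assms unfolding k_def[symmetric] by (intro Max_rep)
  finally show ?thesis unfolding k_def by simp
qed




lemma fpps: assumes "prob_space \<mu>" shows "finite_product_prob_space (\<lambda>_. \<mu>) {..<n::nat}"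
proof -
  have "sigma_finite_measure \<mu>" using assms by (rule prob_space_imp_sigma_finite)
  then show ?thesis using assms
    unfolding finite_product_prob_space_def finite_product_sigma_finite_def product_prob_space_def
      product_prob_space_axioms_def product_sigma_finite_def finite_product_sigma_finite_axioms_def
    by simp
qed

lemma int_comp:
  fixes \<mu> :: "real measure" and h :: "real \<Rightarrow> real" and i n :: nat
  assumes mu: "prob_space \<mu>" and sb: "sets \<mu> = sets borel"
    and i: "i < n" and hm: "h \<in> borel_measurable borel" and hb: "\<And>z. \<bar>h z\<bar> \<le> B"
  shows "(\<integral>x. h (x i) \<partial>PiM {..<n} (\<lambda>_. \<mu>)) = (\<integral>z. h z \<partial>\<mu>)"
proof -
  interpret finite_product_prob_space "\<lambda>_. \<mu>" "{..<n}" using fpps[OF mu, of n] by simp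
  have hm': "h \<in> borel_measurable \<mu>" using hm by (simp add: measurable_cong_sets[OF sb refl])
  have "(\<integral>x. (\<Prod>l\<in>{..<n}. (\<lambda>l z. if l = i then h z else 1) l (x l)) \<partial>PiM {..<n} (\<lambda>_. \<mu>))
      = (\<Prod>l\<in>{..<n}. integral\<^sup>L \<mu> ((\<lambda>l z. if l = i then h z else 1) l))"
  proof (rule product_integral_prod)
    fix l :: nat
    have "integrable \<mu> h" using hm' hb by (intro M.integrable_const_bound[where B=B]) auto
    then show "integrable \<mu> (\<lambda>z. if l = i then h z else 1)" by (cases "l = i") auto
  qed simp
  moreover have "\<And>l. (\<integral>z. (if l = i then h z else 1) \<partial>\<mu>) = (if l = i then (\<integral>z. h z \<partial>\<mu>) else 1)"
    by (auto simp: M.prob_space)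
  ultimately show ?thesis using i by (simp add: prod.delta)
qed

lemma meas_comp:
  fixes \<mu> :: "real measure" and W :: "real \<Rightarrow> real" and i n :: nat
  assumes sb: "sets \<mu> = sets borel" and "i < n" and "W \<in> borel_measurable borel"
  shows "(\<lambda>x. W (x i)) \<in> borel_measurable (PiM {..<n} (\<lambda>_. \<mu>))"
proof -
  have "W \<in> borel_measurable \<mu>" using assms by (simp add: measurable_cong_sets[OF sb refl])
  then show ?thesis using assms
    by (intro measurable_compose[OF measurable_component_singleton[of i "{..<n}" "\<lambda>_. \<mu>"]]) auto
qed

lemma int_pair:
  fixes \<mu> :: "real measure" and W :: "real \<Rightarrow> real" and i j n :: nat
  assumes mu: "prob_space \<mu>" and sb: "sets \<mu> = sets borel"
    and ij: "i < n" "j < n" "i \<noteq> j" and hm: "W \<in> borel_measurable borel" and hb: "\<And>z. \<bar>W z\<bar> \<le> B"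
  shows "(\<integral>x. W (x i) * W (x j) \<partial>PiM {..<n} (\<lambda>_. \<mu>)) = (\<integral>z. W z \<partial>\<mu>) ^ 2"
proof -
  interpret finite_product_prob_space "\<lambda>_. \<mu>" "{..<n}" using fpps[OF mu, of n] by simp
  have hm': "W \<in> borel_measurable \<mu>" using hm by (simp add: measurable_cong_sets[OF sb refl])
  have "(\<integral>x. (\<Prod>l\<in>{..<n}. (\<lambda>l z. if l = i \<or> l = j then W z else 1) l (x l)) \<partial>PiM {..<n} (\<lambda>_. \<mu>))
      = (\<Prod>l\<in>{..<n}. integral\<^sup>L \<mu> ((\<lambda>l z. if l = i \<or> l = j then W z else 1) l))"
  proof (rule product_integral_prod)
    fix l :: nat
    have "integrable \<mu> W" using hm' hb by (intro M.integrable_const_bound[where B=B]) auto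
    then show "integrable \<mu> (\<lambda>z. if l = i \<or> l = j then W z else 1)" by (cases "l = i \<or> l = j") auto
  qed simp
  moreover have "\<And>l. (\<integral>z. (if l = i \<or> l = j then W z else 1) \<partial>\<mu>) = (if l = i \<or> l = j then (\<integral>z. W z \<partial>\<mu>) else 1)"
    by (auto simp: M.prob_space)
  moreover have "{..<n} \<inter> {l. l = i \<or> l = j} = {i, j}" using ij by auto
  ultimately show ?thesis using ij by (simp add: prod.If_cases power2_eq_square)
qed

lemma prod_le1: "\<bar>a\<bar> \<le> 1 \<Longrightarrow> \<bar>b\<bar> \<le> 1 \<Longrightarrow> a * b \<le> (1::real)"
proof -
  assume "\<bar>a\<bar> \<le> 1" "\<bar>b\<bar> \<le> 1"
  then have "\<bar>a\<bar> * \<bar>b\<bar> \<le> 1" by (intro mult_le_one) auto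
  moreover have "a * b \<le> \<bar>a\<bar> * \<bar>b\<bar>" by (metis abs_ge_self abs_mult)
  ultimately show ?thesis by linarith
qed

lemma second_moment:
  fixes \<mu> :: "real measure" and W :: "real \<Rightarrow> real" and n :: nat
  assumes mu: "prob_space \<mu>" and sb: "sets \<mu> = sets borel"
    and hm: "W \<in> borel_measurable borel" and hb: "\<And>z. \<bar>W z\<bar> \<le> 1" and h0: "(\<integral>z. W z \<partial>\<mu>) = 0"
  shows "(\<integral>x. (\<Sum>i<n. W (x i)) ^ 2 \<partial>PiM {..<n} (\<lambda>_. \<mu>)) \<le> real n"
proof -
  interpret finite_product_prob_space "\<lambda>_. \<mu>" "{..<n}" using fpps[OF mu, of n] by simp
  have intg: "integrable (PiM {..<n} (\<lambda>_. \<mu>)) (\<lambda>x. W (x i) * W (x j))" if "i < n" "j < n" for i j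
  proof (rule integrable_const_bound[where B=1])
    show "AE x in PiM {..<n} (\<lambda>_. \<mu>). norm (W (x i) * W (x j)) \<le> 1"
      using hb by (auto simp: abs_mult intro!: mult_le_one)
    show "(\<lambda>x. W (x i) * W (x j)) \<in> borel_measurable (PiM {..<n} (\<lambda>_. \<mu>))"
      using meas_comp[OF sb that(1) hm] meas_comp[OF sb that(2) hm] by measurable
  qed
  have "(\<lambda>x. (\<Sum>i<n. W (x i)) ^ 2) = (\<lambda>x. \<Sum>i<n. \<Sum>j<n. W (x i) * W (x j))"
    by (simp add: power2_eq_square sum_product)
  have "(\<integral>x. (\<Sum>i<n. W (x i)) ^ 2 \<partial>PiM {..<n} (\<lambda>_. \<mu>))
     = (\<Sum>i<n. \<Sum>j<n. (\<integral>x. W (x i) * W (x j) \<partial>PiM {..<n} (\<lambda>_. \<mu>)))"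
  proof -
    have "(\<integral>x. (\<Sum>i<n. \<Sum>j<n. W (x i) * W (x j)) \<partial>PiM {..<n} (\<lambda>_. \<mu>))
       = (\<Sum>i<n. (\<integral>x. (\<Sum>j<n. W (x i) * W (x j)) \<partial>PiM {..<n} (\<lambda>_. \<mu>)))"
    proof -
      have intg2: "integrable (PiM {..<n} (\<lambda>_. \<mu>)) (\<lambda>x. \<Sum>j<n. W (x i) * W (x j))" if "i < n" for i
        by (intro Bochner_Integration.integrable_sum) (auto intro: intg that)
      show ?thesis using intg intg2 by simp
    qed
    also have "\<dots> = (\<Sum>i<n. \<Sum>j<n. (\<integral>x. W (x i) * W (x j) \<partial>PiM {..<n} (\<lambda>_. \<mu>)))"
    proof (intro sum.cong refl)
      fix i assume "i \<in> {..<n}"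
      then show "(\<integral>x. (\<Sum>j<n. W (x i) * W (x j)) \<partial>PiM {..<n} (\<lambda>_. \<mu>)) = (\<Sum>j<n. (\<integral>x. W (x i) * W (x j) \<partial>PiM {..<n} (\<lambda>_. \<mu>)))"
        using intg by simp
    qed
    finally show ?thesis using \<open>(\<lambda>x. (\<Sum>i<n. W (x i)) ^ 2) = _\<close> by simp
  qed
  also have "\<dots> \<le> (\<Sum>i<n. \<Sum>j<n. (if i = j then 1 else 0))"
  proof (intro sum_mono)
    fix i j assume i: "i \<in> {..<n}" and j: "j \<in> {..<n}"
    show "(\<integral>x. W (x i) * W (x j) \<partial>PiM {..<n} (\<lambda>_. \<mu>)) \<le> (if i = j then 1 else 0)"
    proof (cases "i = j")
      case True
      have "(\<integral>x. W (x i) * W (x j) \<partial>PiM {..<n} (\<lambda>_. \<mu>)) \<le> (\<integral>x. 1 \<partial>PiM {..<n} (\<lambda>_. \<mu>))"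
      proof (rule integral_mono)
        show "integrable (PiM {..<n} (\<lambda>_. \<mu>)) (\<lambda>x. W (x i) * W (x j))" using i j by (intro intg) auto
        show "integrable (PiM {..<n} (\<lambda>_. \<mu>)) (\<lambda>x. 1)" by simp
        fix x show "W (x i) * W (x j) \<le> 1" using prod_le1[OF hb hb] .
      qed
      then show ?thesis using True P.prob_space by simp
    next
      case False
      then show ?thesis using int_pair[OF mu sb _ _ False hm hb] i j h0 by simp
    qed
  qed
  also have "\<dots> = real n" by simp
  finally show ?thesis .
qed




lemma comp_meas:
  fixes \<mu> :: "real measure" and i n :: nat
  assumes sb: "sets \<mu> = sets borel"
  shows "(\<lambda>x. x i) \<in> borel_measurable (PiM {..<n} (\<lambda>_. \<mu>))"
proof (cases "i < n")
  case True
  show ?thesis using meas_comp[OF sb True measurable_ident_sets[OF refl]] by simp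
next
  case False
  have eq: "x i = undefined" if "x \<in> space (PiM {..<n} (\<lambda>_. \<mu>))" for x
    using that False unfolding space_PiM by (intro PiE_arb[of x]) auto
  show ?thesis using Sigma_Algebra.measurable_cong[OF eq, of "PiM {..<n} (\<lambda>_. \<mu>)" "\<lambda>x. x" borel] by simp
qed

lemma AE01:
  fixes \<mu> :: "real measure" and n :: nat
  assumes mu: "prob_space \<mu>" and sb: "sets \<mu> = sets borel" and m01: "measure \<mu> {0..1} = 1"
  shows "AE x in PiM {..<n} (\<lambda>_. \<mu>). \<forall>i<n. x i \<in> {0..1}"
proof -
  interpret finite_product_prob_space "\<lambda>_. \<mu>" "{..<n}" using fpps[OF mu, of n] by simp
  have "prob (Pi\<^sub>E {..<n} (\<lambda>_. {0..1})) = (\<Prod>i\<in>{..<n}. measure \<mu> {0..1})"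
    by (rule prob_times) (simp add: sb)
  also have "\<dots> = 1" using m01 by simp
  finally have "AE x in PiM {..<n} (\<lambda>_. \<mu>). x \<in> Pi\<^sub>E {..<n} (\<lambda>_. {0..1})"
    by (rule AE_prob_1)
  then show ?thesis by (rule eventually_mono) (simp add: PiE_iff)
qed

lemma abs_le_sq: "a > 0 \<Longrightarrow> \<bar>z\<bar> \<le> z ^ 2 / a + (a::real)"
proof (cases "\<bar>z\<bar> \<le> a")
  case False
  assume a: "a > 0"
  then have "\<bar>z\<bar> * a \<le> \<bar>z\<bar> * \<bar>z\<bar>" using False by (intro mult_left_mono) auto
  then have "\<bar>z\<bar> \<le> z ^ 2 / a" using a by (simp add: field_simps power2_eq_square)
  then show ?thesis using a by linarith
next
  case True
  assume a: "a > 0"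
  then show ?thesis using True by (simp add: add_increasing)
qed

lemma sq_le: "\<bar>z\<bar> \<le> b \<Longrightarrow> norm (z ^ 2) \<le> (b::real) ^ 2"
proof -
  assume "\<bar>z\<bar> \<le> b"
  then have "\<bar>z\<bar> ^ 2 \<le> b ^ 2" by (intro power_mono) auto
  then show ?thesis by simp
qed

lemma abs_moment:
  fixes \<mu> :: "real measure" and W :: "real \<Rightarrow> real" and n :: nat
  assumes mu: "prob_space \<mu>" and sb: "sets \<mu> = sets borel" and n: "n \<ge> 1"
    and hm: "W \<in> borel_measurable borel" and hb: "\<And>z. \<bar>W z\<bar> \<le> 1" and h0: "(\<integral>z. W z \<partial>\<mu>) = 0"
  shows "(\<integral>x. \<bar>\<Sum>i<n. W (x i)\<bar> \<partial>PiM {..<n} (\<lambda>_. \<mu>)) \<le> 2 * sqrt (real n)"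
proof -
  interpret finite_product_prob_space "\<lambda>_. \<mu>" "{..<n}" using fpps[OF mu, of n] by simp
  define a where "a = sqrt (real n)"
  have a: "a > 0" using n by (simp add: a_def)
  have Sm: "(\<lambda>x. \<Sum>i<n. W (x i)) \<in> borel_measurable (PiM {..<n} (\<lambda>_. \<mu>))"
    using meas_comp[OF sb _ hm] by (intro borel_measurable_sum) auto
  have Sb: "\<bar>\<Sum>i<n. W (x i)\<bar> \<le> real n" for x
  proof -
    have "\<bar>\<Sum>i<n. W (x i)\<bar> \<le> (\<Sum>i<n. \<bar>W (x i)\<bar>)" by (rule sum_abs)
    also have "\<dots> \<le> (\<Sum>i<n. 1)" using hb by (intro sum_mono) auto
    finally show ?thesis by simp
  qed
  have i1: "integrable (PiM {..<n} (\<lambda>_. \<mu>)) (\<lambda>x. \<bar>\<Sum>i<n. W (x i)\<bar>)"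
    by (rule integrable_const_bound[where B="real n"]) (use Sb Sm in auto)
  have i2: "integrable (PiM {..<n} (\<lambda>_. \<mu>)) (\<lambda>x. (\<Sum>i<n. W (x i)) ^ 2)"
  proof (rule integrable_const_bound[where B="real n ^ 2"])
    show "AE x in PiM {..<n} (\<lambda>_. \<mu>). norm ((\<Sum>i<n. W (x i)) ^ 2) \<le> real n ^ 2"
      using Sb by (intro AE_I2) (rule sq_le)
  qed (use Sm in measurable)
  have "(\<integral>x. \<bar>\<Sum>i<n. W (x i)\<bar> \<partial>PiM {..<n} (\<lambda>_. \<mu>))
        \<le> (\<integral>x. (\<Sum>i<n. W (x i)) ^ 2 / a + a \<partial>PiM {..<n} (\<lambda>_. \<mu>))"
    using i1 i2 a by (intro integral_mono) (auto intro: abs_le_sq)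
  also have "\<dots> = (\<integral>x. (\<Sum>i<n. W (x i)) ^ 2 \<partial>PiM {..<n} (\<lambda>_. \<mu>)) / a + a"
    using i2 P.prob_space by simp
  also have "\<dots> \<le> real n / a + a"
    using second_moment[OF mu sb hm hb h0, of n] a by (simp add: divide_right_mono)
  also have "real n / a + a = 2 * sqrt (real n)" using a unfolding a_def
    by (simp add: field_simps)
  finally show ?thesis .
qed




lemma core_n:
  fixes \<mu> :: "real measure" and q y t0 :: real and n :: nat
  assumes mu: "prob_space \<mu>" and sb: "sets \<mu> = sets borel" and m01: "measure \<mu> {0..1} = 1"
    and q0: "0 < q" and q1: "q < 1" and t0: "0 \<le> t0" and t0C: "t0 \<le> \<bar>y\<bar> + 1"
    and qA: "measure \<mu> {z. \<bar>z - y\<bar> \<le> t0} = q"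
    and k1: "1 \<le> nat \<lfloor>q * real n\<rfloor>"
  shows "\<bar>(\<integral>x. SW q n x y \<partial>PiM {..<n} (\<lambda>_. \<mu>)) - (q - q * t0 + (\<integral>z. max (t0 - \<bar>z - y\<bar>) 0 \<partial>\<mu>))\<bar>
           \<le> (\<bar>1 - t0\<bar> + (\<bar>y\<bar> + 1) * (1 + 2 * sqrt (real n))) / real n"
proof -
  define P where "P = PiM {..<n} (\<lambda>_. \<mu>)"
  define C where "C = \<bar>y\<bar> + 1"
  define k where "k = nat \<lfloor>q * real n\<rfloor>"
  define J where "J = (\<integral>z. max (t0 - \<bar>z - y\<bar>) 0 \<partial>\<mu>)"
  define Fm where "Fm = (\<lambda>x::nat\<Rightarrow>real. Max ((\<lambda>i. Gs k n (\<lambda>i. \<bar>x i - y\<bar>) \<bar>x i - y\<bar>) ` {..<n}))"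
  define G0 where "G0 = (\<lambda>x::nat\<Rightarrow>real. Gs k n (\<lambda>i. \<bar>x i - y\<bar>) t0)"
  define Nn where "Nn = (\<lambda>x::nat\<Rightarrow>real. (\<Sum>i<n. if \<bar>x i - y\<bar> \<le> t0 then 1 else 0::real))"
  define W where "W = (\<lambda>z::real. (if \<bar>z - y\<bar> \<le> t0 then 1 else 0) - q)"
  interpret finite_product_prob_space "\<lambda>_. \<mu>" "{..<n}" using fpps[OF mu, of n] by simp
  have k1': "1 \<le> k" using k1 by (simp add: k_def)
  have kr: "real k \<le> q * real n" "q * real n - 1 < real k" using k1' unfolding k_def by linarith+
  have kn: "k \<le> n"
  proof -
    have "real k \<le> real n" using kr q1 by (smt (verit) mult_left_le_one_le of_nat_0_le_iff q0)
    then show ?thesis by simp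
  qed
  have n1: "1 \<le> n" using k1' kn by simp
  have C0: "0 \<le> C" "t0 \<le> C" using t0C by (auto simp: C_def)
  have cm[measurable]: "\<And>i. (\<lambda>x. x i) \<in> borel_measurable P" unfolding P_def by (rule comp_meas[OF sb])
  have Fm_m: "Fm \<in> borel_measurable P" unfolding Fm_def Gs_def by measurable
  have G0_m: "G0 \<in> borel_measurable P" unfolding G0_def Gs_def by measurable
  have Nn_m: "Nn \<in> borel_measurable P" unfolding Nn_def by measurable
  have Wm: "W \<in> borel_measurable borel" unfolding W_def by measurable
  have AE1: "AE x in P. \<forall>i<n. x i \<in> {0..1}" unfolding P_def by (rule AE01[OF mu sb m01])
  have Nn_b: "0 \<le> Nn x \<and> Nn x \<le> real n" for x
  proof -
    have "Nn x \<le> (\<Sum>i<n. 1)" unfolding Nn_def by (intro sum_mono) auto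
    moreover have "0 \<le> Nn x" unfolding Nn_def by (intro sum_nonneg) auto
    ultimately show ?thesis by simp
  qed
  have G0_b: "\<bar>G0 x\<bar> \<le> 2 * real n * C" for x
  proof -
    have s1: "(\<Sum>i<n. max (t0 - \<bar>x i - y\<bar>) 0) \<le> (\<Sum>i<n. t0)" using t0 by (intro sum_mono) auto
    have s2: "0 \<le> (\<Sum>i<n. max (t0 - \<bar>x i - y\<bar>) 0)" by (intro sum_nonneg) auto
    have "real k * t0 \<le> real n * C" using kn C0 t0 by (intro mult_mono) auto
    moreover have "real n * t0 \<le> real n * C" using C0 by (intro mult_left_mono) auto
    moreover have "0 \<le> real k * t0" "0 \<le> real n * C" using t0 C0 by auto
    moreover have "2 * real n * C = 2 * (real n * C)" "(\<Sum>i<n. t0) = real n * t0" by simp_all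
    ultimately show ?thesis using s1 s2 t0 unfolding G0_def Gs_def abs_le_iff by linarith
  qed
  have AEb: "AE x in P. \<bar>Fm x - G0 x\<bar> \<le> C * \<bar>real k - Nn x\<bar>"
    using AE1
  proof (rule eventually_mono)
    fix x :: "nat \<Rightarrow> real" assume x: "\<forall>i<n. x i \<in> {0..1}"
    have "\<And>i. i < n \<Longrightarrow> 0 \<le> \<bar>x i - y\<bar> \<and> \<bar>x i - y\<bar> \<le> C"
      using x unfolding C_def by (auto simp: abs_le_iff)
    then show "\<bar>Fm x - G0 x\<bar> \<le> C * \<bar>real k - Nn x\<bar>"
      unfolding Fm_def G0_def Nn_def using k1' kn t0 C0 by (intro P_bound) auto
  qed
  have AEF: "AE x in P. \<bar>Fm x\<bar> \<le> 3 * real n * C"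
    using AEb
  proof (rule eventually_mono)
    fix x assume a: "\<bar>Fm x - G0 x\<bar> \<le> C * \<bar>real k - Nn x\<bar>"
    have "\<bar>real k - Nn x\<bar> \<le> real n" using Nn_b[of x] kn by (simp add: abs_le_iff)
    then have "C * \<bar>real k - Nn x\<bar> \<le> C * real n" using C0 by (intro mult_left_mono) auto
    then show "\<bar>Fm x\<bar> \<le> 3 * real n * C" using a G0_b[of x] by (simp add: algebra_simps abs_le_iff)
  qed
  have Fm_i: "integrable P Fm"
    unfolding P_def by (rule integrable_const_bound[where B="3 * real n * C"]) (use AEF Fm_m P_def in auto)
  have G0_i: "integrable P G0"
    unfolding P_def by (rule integrable_const_bound[where B="2 * real n * C"]) (use G0_b G0_m P_def in auto)
  have nnb: "\<bar>real k - Nn x\<bar> \<le> real k + real n" for x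
    using Nn_b[of x] unfolding abs_le_iff by linarith
  have Nn_i: "integrable P (\<lambda>x. \<bar>real k - Nn x\<bar>)"
    unfolding P_def by (rule integrable_const_bound[where B="real k + real n"])
      (use Nn_m P_def nnb in auto)
  have SWe: "(\<integral>x. SW q n x y \<partial>P) = (real k - (\<integral>x. Fm x \<partial>P)) / real n"
  proof -
    have "(\<integral>x. SW q n x y \<partial>P) = (\<integral>x. (real k - Fm x) / real n \<partial>P)"
      using k1' kn unfolding Fm_def k_def by (intro Bochner_Integration.integral_cong refl SW_eq) auto
    also have "\<dots> = (\<integral>x. (real k - Fm x) \<partial>P) / real n" by simp
    also have "(\<integral>x. (real k - Fm x) \<partial>P) = real k - (\<integral>x. Fm x \<partial>P)"
      using Fm_i P.prob_space unfolding P_def by simp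
    finally show ?thesis .
  qed
  have G0e: "(\<integral>x. G0 x \<partial>P) = real k * t0 - real n * J"
  proof -
    have hb: "\<And>z. \<bar>max (t0 - \<bar>z - y\<bar>) 0\<bar> \<le> t0" using t0 by auto
    have hm: "(\<lambda>z. max (t0 - \<bar>z - y\<bar>) 0) \<in> borel_measurable borel" by measurable
    have ic: "\<And>i. i < n \<Longrightarrow> (\<integral>x. max (t0 - \<bar>x i - y\<bar>) 0 \<partial>P) = J"
      unfolding P_def J_def using int_comp[OF mu sb _ hm hb] by simp
    have ii: "\<And>i. integrable P (\<lambda>x. max (t0 - \<bar>x i - y\<bar>) 0)"
      unfolding P_def by (rule integrable_const_bound[where B=t0]) (use hb cm P_def in auto)
    have "(\<integral>x. G0 x \<partial>P) = real k * t0 - (\<integral>x. (\<Sum>i<n. max (t0 - \<bar>x i - y\<bar>) 0) \<partial>P)"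
      unfolding G0_def Gs_def using ii P.prob_space unfolding P_def by simp
    also have "(\<integral>x. (\<Sum>i<n. max (t0 - \<bar>x i - y\<bar>) 0) \<partial>P) = (\<Sum>i<n. J)"
      using ii ic by simp
    finally show ?thesis by simp
  qed
  have W0: "(\<integral>z. W z \<partial>\<mu>) = 0"
  proof -
    have Am: "{z. \<bar>z - y\<bar> \<le> t0} \<in> sets \<mu>" unfolding sb by measurable
    have "(\<lambda>z. (if \<bar>z - y\<bar> \<le> t0 then 1 else 0::real)) = indicator {z. \<bar>z - y\<bar> \<le> t0}"
      by (auto simp: indicator_def)
    then have "(\<integral>z. (if \<bar>z - y\<bar> \<le> t0 then 1 else 0::real) \<partial>\<mu>) = q"
      using Am qA by simp
    moreover have "integrable \<mu> (\<lambda>z. (if \<bar>z - y\<bar> \<le> t0 then 1 else 0::real))"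
      using Am \<open>_ = indicator _\<close> by (simp add: M.emeasure_eq_measure)
    ultimately show ?thesis unfolding W_def using prob_space.prob_space[OF mu] by simp
  qed
  have Wb: "\<And>z. \<bar>W z\<bar> \<le> 1" using q0 q1 unfolding W_def by auto
  have am: "(\<integral>x. \<bar>\<Sum>i<n. W (x i)\<bar> \<partial>P) \<le> 2 * sqrt (real n)"
    unfolding P_def by (rule abs_moment[OF mu sb n1 Wm Wb W0])
  have Sm: "(\<lambda>x. \<bar>\<Sum>i<n. W (x i)\<bar>) \<in> borel_measurable P"
    using Wm by measurable
  have Si: "integrable P (\<lambda>x. \<bar>\<Sum>i<n. W (x i)\<bar>)"
  proof -
    have "\<bar>\<Sum>i<n. W (x i)\<bar> \<le> real n" for x
    proof -
      have "\<bar>\<Sum>i<n. W (x i)\<bar> \<le> (\<Sum>i<n. \<bar>W (x i)\<bar>)" by (rule sum_abs)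
      also have "\<dots> \<le> (\<Sum>i<n. 1)" using Wb by (intro sum_mono) auto
      finally show ?thesis by simp
    qed
    then show ?thesis unfolding P_def
      by (intro integrable_const_bound[where B="real n"]) (use Sm P_def in auto)
  qed
  have Nnb: "\<bar>real k - Nn x\<bar> \<le> 1 + \<bar>\<Sum>i<n. W (x i)\<bar>" for x
  proof -
    have "Nn x - real n * q = (\<Sum>i<n. W (x i))"
      unfolding Nn_def W_def by (simp add: sum_subtractf)
    then have "Nn x = q * real n + (\<Sum>i<n. W (x i))" by (simp add: algebra_simps)
    moreover note kr abs_ge_self[of "\<Sum>i<n. W (x i)"] abs_ge_minus_self[of "\<Sum>i<n. W (x i)"]
    ultimately show ?thesis unfolding abs_le_iff[of "real k - Nn x"] by linarith
  qed
  have eNn: "(\<integral>x. \<bar>real k - Nn x\<bar> \<partial>P) \<le> 1 + 2 * sqrt (real n)"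
  proof -
    have "(\<integral>x. \<bar>real k - Nn x\<bar> \<partial>P) \<le> (\<integral>x. 1 + \<bar>\<Sum>i<n. W (x i)\<bar> \<partial>P)"
    proof (rule integral_mono)
      show "integrable P (\<lambda>x. 1 + \<bar>\<Sum>i<n. W (x i)\<bar>)"
        using Si unfolding P_def by (intro Bochner_Integration.integrable_add) auto
    qed (use Nn_i Nnb in auto)
    also have "\<dots> = 1 + (\<integral>x. \<bar>\<Sum>i<n. W (x i)\<bar> \<partial>P)"
      using Si P.prob_space unfolding P_def by simp
    finally show ?thesis using am by simp
  qed
  have eD: "\<bar>(\<integral>x. Fm x \<partial>P) - (\<integral>x. G0 x \<partial>P)\<bar> \<le> C * (1 + 2 * sqrt (real n))"
  proof -
    have "\<bar>(\<integral>x. Fm x \<partial>P) - (\<integral>x. G0 x \<partial>P)\<bar> = \<bar>\<integral>x. Fm x - G0 x \<partial>P\<bar>"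
      using Fm_i G0_i by simp
    also have "\<dots> \<le> (\<integral>x. \<bar>Fm x - G0 x\<bar> \<partial>P)"
      using integral_norm_bound[of P "\<lambda>x. Fm x - G0 x"] by simp
    also have "\<dots> \<le> (\<integral>x. C * \<bar>real k - Nn x\<bar> \<partial>P)"
      using Fm_i G0_i Nn_i AEb by (intro integral_mono_AE) auto
    also have "\<dots> = C * (\<integral>x. \<bar>real k - Nn x\<bar> \<partial>P)" by simp
    also have "\<dots> \<le> C * (1 + 2 * sqrt (real n))" using eNn C0 by (intro mult_left_mono) auto
    finally show ?thesis .
  qed
  define e where "e = (\<integral>x. Fm x \<partial>P) - (\<integral>x. G0 x \<partial>P)"
  have kq: "\<bar>real k / real n - q\<bar> \<le> 1 / real n"
  proof -
    have "real k / real n - q = (real k - q * real n) / real n" using n1 by (simp add: field_simps)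
    moreover have "\<bar>real k - q * real n\<bar> \<le> 1" using kr by linarith
    ultimately show ?thesis by (simp add: abs_divide divide_right_mono)
  qed
  have "(\<integral>x. SW q n x y \<partial>P) - (q - q * t0 + J) = (real k / real n - q) * (1 - t0) - e / real n"
    unfolding SWe e_def G0e using n1 by (simp add: field_simps)
  then have "\<bar>(\<integral>x. SW q n x y \<partial>P) - (q - q * t0 + J)\<bar> \<le> \<bar>real k / real n - q\<bar> * \<bar>1 - t0\<bar> + \<bar>e\<bar> / real n"
    using abs_triangle_ineq4[of "(real k / real n - q) * (1 - t0)" "e / real n"] by (simp add: abs_mult abs_divide)
  also have "\<dots> \<le> 1 / real n * \<bar>1 - t0\<bar> + C * (1 + 2 * sqrt (real n)) / real n"
    using kq eD unfolding e_def by (intro add_mono mult_right_mono divide_right_mono) auto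
  also have "\<dots> = (\<bar>1 - t0\<bar> + C * (1 + 2 * sqrt (real n))) / real n"
    by (simp add: add_divide_distrib)
  finally show ?thesis unfolding P_def J_def C_def .
qed



lemma W1_lower:
  fixes \<mu> :: "real measure" and \<pi> :: "(real \<times> real) measure" and q y t0 :: real
  assumes mu: "prob_space \<mu>" and sb: "sets \<mu> = sets borel" and t0: "0 \<le> t0" and q0: "0 < q"
    and J: "(\<integral>\<^sup>+ z. ennreal (max (t0 - \<bar>z - y\<bar>) 0) \<partial>\<mu>) = ennreal J" and J0: "J \<le> t0 * q" and J_nonneg: "0 \<le> J"
    and \<pi>s: "sets \<pi> = sets (borel \<Otimes>\<^sub>M borel)"
    and dom: "\<forall>A \<in> sets borel. emeasure (distr \<pi> borel fst) A \<le> emeasure \<mu> A"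
    and marg: "distr \<pi> borel snd = scale_measure (ennreal q) (return borel y)"
  shows "ennreal (t0 * q - J) \<le> (\<integral>\<^sup>+ p. ennreal \<bar>fst p - snd p\<bar> \<partial>\<pi>)"
proof -
  define \<pi>1 where "\<pi>1 = distr \<pi> borel fst"
  have mf: "fst \<in> measurable \<pi> borel" unfolding measurable_cong_sets[OF \<pi>s refl] by (rule measurable_fst)
  have ms: "snd \<in> measurable \<pi> borel" unfolding measurable_cong_sets[OF \<pi>s refl] by (rule measurable_snd)
  have sp: "space \<mu> = UNIV" using sets_eq_imp_space_eq[OF sb] by simp
  have s1: "sets \<pi>1 = sets \<mu>" unfolding \<pi>1_def using sb by simp
  have le: "\<pi>1 \<le> \<mu>"
  proof -
    have "emeasure \<pi>1 B \<le> emeasure \<mu> B" for B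
    proof (cases "B \<in> sets borel")
      case True then show ?thesis using dom unfolding \<pi>1_def by auto
    next
      case False then show ?thesis by (simp add: \<pi>1_def emeasure_notin_sets)
    qed
    then show ?thesis unfolding le_measure_iff using s1 sp by (auto simp: \<pi>1_def le_fun_def)
  qed
  have null: "emeasure \<pi> (snd -` (UNIV - {y}) \<inter> space \<pi>) = 0"
  proof -
    have "emeasure \<pi> (snd -` (UNIV - {y}) \<inter> space \<pi>) = emeasure (distr \<pi> borel snd) (UNIV - {y})"
      using ms by (simp add: emeasure_distr)
    also have "\<dots> = 0" unfolding marg by simp
    finally show ?thesis .
  qed
  have AEy: "AE p in \<pi>. snd p = y"
    by (rule AE_I'[where N="snd -` (UNIV - {y}) \<inter> space \<pi>"]) (use null ms in \<open>auto simp: null_sets_def\<close>)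
  have tot: "emeasure \<pi>1 (space \<pi>1) = ennreal q"
  proof -
    have "emeasure \<pi>1 (space \<pi>1) = emeasure \<pi> (space \<pi>)"
      unfolding \<pi>1_def using mf by (simp add: emeasure_distr)
    also have "\<dots> = emeasure (distr \<pi> borel snd) UNIV"
      using ms by (simp add: emeasure_distr)
    also have "\<dots> = ennreal q" unfolding marg by simp
    finally show ?thesis .
  qed
  define I where "I = (\<integral>\<^sup>+ x. ennreal \<bar>x - y\<bar> \<partial>\<pi>1)"
  have "(\<integral>\<^sup>+ p. ennreal \<bar>fst p - snd p\<bar> \<partial>\<pi>) = (\<integral>\<^sup>+ p. ennreal \<bar>fst p - y\<bar> \<partial>\<pi>)"
    using AEy by (intro nn_integral_cong_AE) auto
  also have "\<dots> = I" unfolding I_def \<pi>1_def using mf by (subst nn_integral_distr) auto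
  finally have eqI: "(\<integral>\<^sup>+ p. ennreal \<bar>fst p - snd p\<bar> \<partial>\<pi>) = I" .
  have hle: "(\<integral>\<^sup>+ z. ennreal (max (t0 - \<bar>z - y\<bar>) 0) \<partial>\<pi>1) \<le> ennreal J"
    unfolding J[symmetric] using s1 le by (rule nn_integral_mono_measure)
  have "ennreal (t0 * q) = (\<integral>\<^sup>+ z. ennreal t0 \<partial>\<pi>1)"
    using tot t0 q0 by (simp add: ennreal_mult)
  also have "\<dots> \<le> (\<integral>\<^sup>+ z. ennreal \<bar>z - y\<bar> + ennreal (max (t0 - \<bar>z - y\<bar>) 0) \<partial>\<pi>1)"
  proof (intro nn_integral_mono)
    fix z
    have "t0 \<le> \<bar>z - y\<bar> + max (t0 - \<bar>z - y\<bar>) 0" by (simp add: max_def)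
    then have "ennreal t0 \<le> ennreal (\<bar>z - y\<bar> + max (t0 - \<bar>z - y\<bar>) 0)" by (rule ennreal_leI)
    also have "\<dots> = ennreal \<bar>z - y\<bar> + ennreal (max (t0 - \<bar>z - y\<bar>) 0)" by (rule ennreal_plus) auto
    finally show "ennreal t0 \<le> ennreal \<bar>z - y\<bar> + ennreal (max (t0 - \<bar>z - y\<bar>) 0)" .
  qed
  also have "\<dots> = I + (\<integral>\<^sup>+ z. ennreal (max (t0 - \<bar>z - y\<bar>) 0) \<partial>\<pi>1)"
    unfolding I_def by (rule nn_integral_add) (auto simp: \<pi>1_def)
  also have "\<dots> \<le> I + ennreal J" using hle by (rule add_left_mono)
  finally have main: "ennreal (t0 * q) \<le> I + ennreal J" .
  have "ennreal (t0 * q) = ennreal (t0 * q - J) + ennreal J"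
    using J0 J_nonneg by (simp add: ennreal_plus[symmetric] del: ennreal_plus)
  with main have "ennreal J + ennreal (t0 * q - J) \<le> ennreal J + I" by (simp add: add.commute)
  then have "ennreal (t0 * q - J) \<le> I" by (simp add: ennreal_add_left_cancel_le)
  then show ?thesis using eqI by simp
qed

lemma W1_val:
  fixes \<mu> :: "real measure" and q y t0 :: real
  assumes mu: "prob_space \<mu>" and sb: "sets \<mu> = sets borel" and t0: "0 \<le> t0" and q0: "0 < q"
    and qA: "measure \<mu> {z. \<bar>z - y\<bar> \<le> t0} = q"
  shows "W1 \<mu> (scale_measure (ennreal q) (return borel y)) = ennreal (t0 * q - (\<integral>z. max (t0 - \<bar>z - y\<bar>) 0 \<partial>\<mu>))
         \<and> (\<integral>z. max (t0 - \<bar>z - y\<bar>) 0 \<partial>\<mu>) \<le> t0 * q"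
proof -
  interpret M: prob_space \<mu> by (rule mu)
  define A where "A = {z. \<bar>z - y\<bar> \<le> t0}"
  define J where "J = (\<integral>z. max (t0 - \<bar>z - y\<bar>) 0 \<partial>\<mu>)"
  have sp: "space \<mu> = UNIV" using sets_eq_imp_space_eq[OF sb] by simp
  have Am: "A \<in> sets \<mu>" unfolding sb A_def by measurable
  have hm: "(\<lambda>z. max (t0 - \<bar>z - y\<bar>) 0) \<in> borel_measurable \<mu>"
    unfolding measurable_cong_sets[OF sb refl] by measurable
  have hi: "integrable \<mu> (\<lambda>z. max (t0 - \<bar>z - y\<bar>) 0)"
    by (rule M.integrable_const_bound[where B=t0]) (use hm t0 in auto)
  have ii: "integrable \<mu> (\<lambda>z. t0 * indicator A z)"
    using Am by (simp add: M.emeasure_eq_measure)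
  have intA: "(\<integral>z. t0 * indicator A z \<partial>\<mu>) = t0 * q"
    using Am qA unfolding A_def by simp
  have J0: "0 \<le> J" unfolding J_def by (rule Bochner_Integration.integral_nonneg) auto
  have Jle: "J \<le> t0 * q"
  proof -
    have "J \<le> (\<integral>z. t0 * indicator A z \<partial>\<mu>)" unfolding J_def
      by (rule integral_mono[OF hi ii]) (auto simp: A_def indicator_def)
    then show ?thesis using intA by linarith
  qed
  have Jn: "(\<integral>\<^sup>+ z. ennreal (max (t0 - \<bar>z - y\<bar>) 0) \<partial>\<mu>) = ennreal J"
    unfolding J_def by (rule nn_integral_eq_integral[OF hi]) auto
  let ?S = "{\<pi> :: (real \<times> real) measure.
              sets \<pi> = sets (borel \<Otimes>\<^sub>M borel) \<and>
              (\<forall>A \<in> sets borel. emeasure (distr \<pi> borel fst) A \<le> emeasure \<mu> A) \<and>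
              distr \<pi> borel snd = scale_measure (ennreal q) (return borel y)}"
  have lower: "ennreal (t0 * q - J) \<le> W1 \<mu> (scale_measure (ennreal q) (return borel y))"
    unfolding W1_def
  proof (rule INF_greatest)
    fix \<pi> assume "\<pi> \<in> ?S"
    then show "ennreal (t0 * q - J) \<le> (\<integral>\<^sup>+ p. ennreal \<bar>fst p - snd p\<bar> \<partial>\<pi>)"
      using W1_lower[OF mu sb t0 q0 Jn Jle J0] by auto
  qed
  define \<mu>A where "\<mu>A = density \<mu> (indicator A)"
  define \<pi>0 where "\<pi>0 = distr \<mu>A (borel \<Otimes>\<^sub>M borel) (\<lambda>x. (x, y))"
  have sA: "sets \<mu>A = sets borel" unfolding \<mu>A_def using sb by simp
  have spA: "space \<mu>A = UNIV" unfolding \<mu>A_def using sp by simp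
  have mp: "(\<lambda>x. (x, y)) \<in> measurable \<mu>A (borel \<Otimes>\<^sub>M borel)"
    unfolding measurable_cong_sets[OF sA refl] by measurable
  have mid: "(\<lambda>x. x) \<in> measurable \<mu>A borel" unfolding measurable_cong_sets[OF sA refl] by simp
  have mc: "(\<lambda>x. y) \<in> measurable \<mu>A borel" by simp
  have eA: "emeasure \<mu>A B = emeasure \<mu> (A \<inter> B)" if "B \<in> sets borel" for B
    unfolding \<mu>A_def using Am that sb by (intro emeasure_restricted) auto
  have d1: "distr \<pi>0 borel fst = distr \<mu>A borel (\<lambda>x. x)"
    unfolding \<pi>0_def by (subst distr_distr) (use mp in \<open>auto simp: comp_def\<close>)
  have d2: "distr \<pi>0 borel snd = distr \<mu>A borel (\<lambda>x. y)"
    unfolding \<pi>0_def by (subst distr_distr) (use mp in \<open>auto simp: comp_def\<close>)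
  have inS: "\<pi>0 \<in> ?S"
  proof (intro CollectI conjI ballI)
    show "sets \<pi>0 = sets (borel \<Otimes>\<^sub>M borel)" unfolding \<pi>0_def by simp
  next
    fix B :: "real set" assume B: "B \<in> sets borel"
    have "emeasure (distr \<pi>0 borel fst) B = emeasure \<mu>A B"
      unfolding d1 using B mid spA by (simp add: emeasure_distr)
    also have "\<dots> = emeasure \<mu> (A \<inter> B)" using eA B by simp
    also have "\<dots> \<le> emeasure \<mu> B" using B sb by (intro emeasure_mono) auto
    finally show "emeasure (distr \<pi>0 borel fst) B \<le> emeasure \<mu> B" .
  next
    show "distr \<pi>0 borel snd = scale_measure (ennreal q) (return borel y)"
      unfolding d2
    proof (rule measure_eqI)
      show "sets (distr \<mu>A borel (\<lambda>x. y)) = sets (scale_measure (ennreal q) (return borel y))" by simp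
      fix B assume B: "B \<in> sets (distr \<mu>A borel (\<lambda>x. y))"
      then have B': "B \<in> sets borel" by simp
      have "emeasure \<mu>A UNIV = ennreal q"
        using eA[of UNIV] Am qA unfolding A_def by (simp add: M.emeasure_eq_measure)
      then show "emeasure (distr \<mu>A borel (\<lambda>x. y)) B = emeasure (scale_measure (ennreal q) (return borel y)) B"
        using B' mc spA by (simp add: emeasure_distr vimage_def indicator_def)
    qed
  qed
  have val: "(\<integral>\<^sup>+ p. ennreal \<bar>fst p - snd p\<bar> \<partial>\<pi>0) = ennreal (t0 * q - J)"
  proof -
    have "(\<integral>\<^sup>+ p. ennreal \<bar>fst p - snd p\<bar> \<partial>\<pi>0) = (\<integral>\<^sup>+ x. ennreal \<bar>x - y\<bar> \<partial>\<mu>A)"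
    proof -
      have fm: "(\<lambda>p. ennreal \<bar>fst p - snd p\<bar>) \<in> borel_measurable (distr \<mu>A (borel \<Otimes>\<^sub>M borel) (\<lambda>x. (x, y)))"
        unfolding measurable_cong_sets[OF sets_distr refl] by measurable
      show ?thesis unfolding \<pi>0_def using nn_integral_distr[OF mp fm] by simp
    qed
    also have "\<dots> = (\<integral>\<^sup>+ x. indicator A x * ennreal \<bar>x - y\<bar> \<partial>\<mu>)"
      unfolding \<mu>A_def using Am sb
      by (subst nn_integral_density) (auto simp: measurable_cong_sets[OF sb refl])
    also have "\<dots> = (\<integral>\<^sup>+ x. ennreal (t0 * indicator A x - max (t0 - \<bar>x - y\<bar>) 0) \<partial>\<mu>)"
      by (intro nn_integral_cong) (auto simp: A_def indicator_def max_def)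
    also have "\<dots> = ennreal (\<integral>x. t0 * indicator A x - max (t0 - \<bar>x - y\<bar>) 0 \<partial>\<mu>)"
      by (rule nn_integral_eq_integral[OF Bochner_Integration.integrable_diff[OF ii hi]])
        (use t0 in \<open>auto simp: A_def indicator_def max_def\<close>)
    also have "(\<integral>x. t0 * indicator A x - max (t0 - \<bar>x - y\<bar>) 0 \<partial>\<mu>) = t0 * q - J"
      using ii hi intA unfolding J_def by simp
    finally show ?thesis .
  qed
  have upper: "W1 \<mu> (scale_measure (ennreal q) (return borel y)) \<le> ennreal (t0 * q - J)"
    unfolding W1_def using inS val by (metis (no_types, lifting) INF_lower)
  have "W1 \<mu> (scale_measure (ennreal q) (return borel y)) = ennreal (t0 * q - J)"
    using lower upper by (rule antisym[rotated])
  then show ?thesis using Jle unfolding J_def by simp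
qed




lemma core_lim:
  fixes \<mu> :: "real measure" and q y t0 :: real
  assumes mu: "prob_space \<mu>" and sb: "sets \<mu> = sets borel" and m01: "measure \<mu> {0..1} = 1"
    and q0: "0 < q" and q1: "q < 1" and t0: "0 \<le> t0" and t0C: "t0 \<le> \<bar>y\<bar> + 1"
    and qA: "measure \<mu> {z. \<bar>z - y\<bar> \<le> t0} = q"
  shows "(\<lambda>n. \<integral>x. SW q n x y \<partial>PiM {..<n} (\<lambda>_. \<mu>))
           \<longlonglongrightarrow> q - q * t0 + (\<integral>z. max (t0 - \<bar>z - y\<bar>) 0 \<partial>\<mu>)"
proof -
  define L where "L = q - q * t0 + (\<integral>z. max (t0 - \<bar>z - y\<bar>) 0 \<partial>\<mu>)"
  define b where "b = (\<lambda>n::nat. (\<bar>1 - t0\<bar> + (\<bar>y\<bar> + 1) * (1 + 2 * sqrt (real n))) / real n)"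
  have ev: "eventually (\<lambda>n. 1 \<le> nat \<lfloor>q * real n\<rfloor>) sequentially"
  proof (rule eventually_sequentiallyI[of "nat \<lceil>1 / q\<rceil>"])
    fix n :: nat assume "nat \<lceil>1 / q\<rceil> \<le> n"
    then have "1 / q \<le> real n" by linarith
    then have "1 \<le> q * real n" using q0 by (simp add: field_simps)
    then show "1 \<le> nat \<lfloor>q * real n\<rfloor>" by linarith
  qed
  have "eventually (\<lambda>n. norm ((\<integral>x. SW q n x y \<partial>PiM {..<n} (\<lambda>_. \<mu>)) - L) \<le> b n) sequentially"
    using ev
  proof (rule eventually_mono)
    fix n :: nat assume "1 \<le> nat \<lfloor>q * real n\<rfloor>"
    then show "norm ((\<integral>x. SW q n x y \<partial>PiM {..<n} (\<lambda>_. \<mu>)) - L) \<le> b n"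
      using core_n[OF mu sb m01 q0 q1 t0 t0C qA] unfolding L_def b_def by simp
  qed
  moreover have "b \<longlonglongrightarrow> 0" unfolding b_def by real_asymp
  ultimately have "(\<lambda>n. (\<integral>x. SW q n x y \<partial>PiM {..<n} (\<lambda>_. \<mu>)) - L) \<longlonglongrightarrow> 0"
    by (rule Lim_null_comparison)
  then show ?thesis unfolding L_def[symmetric] by (rule LIM_zero_cancel)
qed

theorem theorem3p3:
  fixes \<mu> :: "real measure" and f :: "real \<Rightarrow> real" and q y :: real
  assumes "prob_space \<mu>"
    and "\<And>x. f x \<ge> 0"
    and "continuous_on {0..1} f"
    and "\<mu> = density lborel (\<lambda>x. ennreal (f x * indicator {0..1} x))"
    and "0 < q" and "q < 1"
  shows "(\<lambda>n. \<integral>x. SW q n x y \<partial>(PiM {..<n} (\<lambda>_. \<mu>)))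
           \<longlonglongrightarrow> q - enn2real (W1 \<mu> (scale_measure (ennreal q) (return borel y)))"
proof -
  note mu = assms(1)
  interpret M: prob_space \<mu> by (rule mu)
  define g where "g = (\<lambda>x. ennreal (f x * indicator {0..1} x))"
  have mueq: "\<mu> = density lborel g" unfolding g_def by (rule assms(4))
  have gm: "g \<in> borel_measurable lborel"
  proof -
    have "(\<lambda>x. indicator {0..1} x *\<^sub>R f x) \<in> borel_measurable borel"
      by (rule borel_measurable_continuous_on_indicator) (auto simp: assms(3))
    then have "(\<lambda>x. f x * indicator {0..1} x) \<in> borel_measurable lborel"
      by (simp add: mult.commute measurable_cong_sets[OF sets_lborel refl])
    then show ?thesis unfolding g_def by measurable
  qed
  have sb: "sets \<mu> = sets borel" unfolding mueq by simp
  have sp: "space \<mu> = UNIV" unfolding mueq by simp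
  have m01: "measure \<mu> {0..1} = 1"
  proof -
    have "emeasure \<mu> {0..1} = (\<integral>\<^sup>+ x. g x * indicator {0..1} x \<partial>lborel)"
      unfolding mueq using gm by (simp add: emeasure_density)
    also have "\<dots> = (\<integral>\<^sup>+ x. g x * indicator UNIV x \<partial>lborel)"
      by (intro nn_integral_cong) (auto simp: g_def indicator_def)
    also have "\<dots> = emeasure \<mu> UNIV"
      unfolding mueq using gm by (simp add: emeasure_density)
    also have "\<dots> = 1" using M.emeasure_space_1 sp by simp
    finally show ?thesis by (simp add: M.emeasure_eq_measure)
  qed
  have sing: "measure \<mu> {a} = 0" for a
  proof -
    have "AE x in lborel. x \<in> {a} \<longrightarrow> g x = 0"
      using AE_lborel_singleton[of a] by (rule eventually_mono) simp
    then have "{a} \<in> null_sets \<mu>" unfolding mueq null_sets_density_iff[OF gm] by simp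
    then show ?thesis by (simp add: measure_def emeasure_notin_sets null_setsD1)
  qed
  define C where "C = \<bar>y\<bar> + 1"
  define \<nu> where "\<nu> = distr \<mu> borel (\<lambda>z. \<bar>z - y\<bar>)"
  have dm: "(\<lambda>z. \<bar>z - y\<bar>) \<in> measurable \<mu> borel" unfolding measurable_cong_sets[OF sb refl] by measurable
  have pnu: "prob_space \<nu>" unfolding \<nu>_def using dm by (rule M.prob_space_distr)
  interpret N: real_distribution \<nu>
    unfolding real_distribution_def real_distribution_axioms_def using pnu by (simp add: \<nu>_def)
  have cdfeq: "cdf \<nu> t = measure \<mu> {z. \<bar>z - y\<bar> \<le> t}" for t
    unfolding cdf_def \<nu>_def using dm sp by (simp add: measure_distr vimage_def)
  have cont: "continuous_on {0..C} (cdf \<nu>)"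
  proof (intro continuous_at_imp_continuous_on ballI)
    fix t :: real
    have "measure \<nu> {t} = measure \<mu> {z. \<bar>z - y\<bar> = t}"
      unfolding \<nu>_def using dm sp by (simp add: measure_distr vimage_def)
    also have "\<dots> \<le> measure \<mu> ({y - t} \<union> {y + t})"
      using sb by (intro M.finite_measure_mono) auto
    also have "\<dots> \<le> measure \<mu> {y - t} + measure \<mu> {y + t}"
      using sb by (intro measure_Un_le) auto
    also have "\<dots> = 0" using sing by simp
    finally have "measure \<nu> {t} = 0" using measure_nonneg[of \<nu> "{t}"] by linarith
    then show "isCont (cdf \<nu>) t" by (simp add: N.isCont_cdf)
  qed
  have c0: "cdf \<nu> 0 \<le> q"
  proof -
    have "{z. \<bar>z - y\<bar> \<le> 0} = {y}" by auto
    then show ?thesis using cdfeq[of 0] sing[of y] assms(5) by simp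
  qed
  have cC: "q \<le> cdf \<nu> C"
  proof -
    have "measure \<mu> {0..1} \<le> measure \<mu> {z. \<bar>z - y\<bar> \<le> C}"
      using sb unfolding C_def by (intro M.finite_measure_mono) (auto, measurable)
    then show ?thesis using cdfeq[of C] m01 assms(6) by simp
  qed
  obtain t0 where t0: "0 \<le> t0" "t0 \<le> C" "cdf \<nu> t0 = q"
    using IVT'[of "cdf \<nu>" 0 q C] c0 cC cont unfolding C_def by auto
  have qA: "measure \<mu> {z. \<bar>z - y\<bar> \<le> t0} = q" using t0(3) cdfeq by simp
  have W: "W1 \<mu> (scale_measure (ennreal q) (return borel y)) = ennreal (t0 * q - (\<integral>z. max (t0 - \<bar>z - y\<bar>) 0 \<partial>\<mu>))"
     "(\<integral>z. max (t0 - \<bar>z - y\<bar>) 0 \<partial>\<mu>) \<le> t0 * q"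
    using W1_val[OF mu sb t0(1) assms(5) qA] by auto
  have eq: "q - enn2real (W1 \<mu> (scale_measure (ennreal q) (return borel y)))
        = q - q * t0 + (\<integral>z. max (t0 - \<bar>z - y\<bar>) 0 \<partial>\<mu>)"
    using W by (simp add: algebra_simps)
  show ?thesis unfolding eq
    by (rule core_lim[OF mu sb m01 assms(5,6) t0(1) t0(2)[unfolded C_def] qA])
qed


end
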